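(* Let $k_{\mathcal{Z}}$ and $k_{\mathcal{Y}}$ be strictly positive definite kernels on $\mathcal{Z}$ and $\mathcal{Y}=\{\bm{e}_1,\dots,\bm{e}_c\}\subset\mathbb{R}^c$, and let $\varepsilon>0$. Let $(\bm{z}_i,\bm{y}_i)_{i=1}^n$ be observations with $\bm{z}_1,\dots,\bm{z}_n\in\mathcal{Z}$ pairwise distinct and $\bm{y}_i\in\mathcal{Y}$, where every element of $\mathcal{Y}$ occurs among the $\bm{y}_i$. Let $\bm{K}_{ij}=k_{\mathcal{Z}}(\bm{z}_i,\bm{z}_j)$, $\bm{L}_{ij}=k_{\mathcal{Y}}(\bm{y}_i,\bm{y}_j)$, $\tilde{\bm{L}}=\varepsilon n\bm{I}_n+\bm{L}$, and for $y\in\mathcal{Y}$ let $\bm{L}_y=(k_{\mathcal{Y}}(\bm{y}_1,y),\dots,k_{\mathcal{Y}}(\bm{y}_n,y))^T$ (the column of $\bm{L}$ indexed by any $i$ with $\bm{y}_i=y$). Define the empirical conditional mean embeddings $\hat{\mu}_{Z|y}=\bm{\Phi}\tilde{\bm{L}}^{-1}\bm{L}_y\in\mathcal{H}_{\mathcal{Z}}$, where $\bm{\Phi}=(\phi(\bm{z}_1),\dots,\phi(\bm{z}_n))$, and $$\hat{D}(y_i,y_j)=\mathrm{MCMD}(\hat{P}_{Z|y_i},\hat{P}_{Z|y_j})=\|\hat{\mu}_{Z|y_i}-\hat{\mu}_{Z|y_j}\|_{\mathcal{H}_{\mathcal{Z}}}=\sqrt{(\bm{L}_{y_i}-\bm{L}_{y_j})^T\tilde{\bm{L}}^{-1}\bm{K}\tilde{\bm{L}}^{-1}(\bm{L}_{y_i}-\bm{L}_{y_j})}.$$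 Then $\hat{D}$ is a metric on $\mathcal{Y}$.
   Context: $\mathcal{H}_{\mathcal{Z}}$ is the RKHS of $k_{\mathcal{Z}}$ with feature map $\phi(z)=k_{\mathcal{Z}}(z,\cdot)$. A kernel is strictly positive definite if its Gram matrix on any finite set of pairwise distinct points is positive definite. $\bm{e}_i$ denotes the $i$-th standard basis vector of $\mathbb{R}^c$ (one-hot labels). *)

theory Defs
  imports "HOL-Analysis.Abstract_Metric_Spaces" "Jordan_Normal_Form.Gauss_Jordan_Elimination"
begin

definition onehot :: "nat \<Rightarrow> nat \<Rightarrow> real list" where
  "onehot c i = map (\<lambda>j. if j = i then 1 else 0) [0..<c]"

definition label_space :: "nat \<Rightarrow> real list set" where
  "label_space c = onehot c ` {..<c}"

definition strictly_pd_kernel_on :: "'a set \<Rightarrow> ('a \<Rightarrow> 'a \<Rightarrow> real) \<Rightarrow> bool" where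
  "strictly_pd_kernel_on S k \<longleftrightarrow>
     (\<forall>x\<in>S. \<forall>y\<in>S. k x y = k y x) \<and>
     (\<forall>xs. set xs \<subseteq> S \<longrightarrow> distinct xs \<longrightarrow>
        (\<forall>a :: nat \<Rightarrow> real. (\<exists>i<length xs. a i \<noteq> 0) \<longrightarrow>
           0 < (\<Sum>i<length xs. \<Sum>j<length xs. a i * a j * k (xs ! i) (xs ! j))))"

definition gram_mat :: "('a \<Rightarrow> 'a \<Rightarrow> real) \<Rightarrow> 'a list \<Rightarrow> real mat" where
  "gram_mat k xs = mat (length xs) (length xs) (\<lambda>(i, j). k (xs ! i) (xs ! j))"

definition Ltilde :: "('b \<Rightarrow> 'b \<Rightarrow> real) \<Rightarrow> real \<Rightarrow> 'b list \<Rightarrow> real mat" where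
  "Ltilde kY \<epsilon> ys = (\<epsilon> * real (length ys)) \<cdot>\<^sub>m 1\<^sub>m (length ys) + gram_mat kY ys"

definition Lvec :: "('b \<Rightarrow> 'b \<Rightarrow> real) \<Rightarrow> 'b list \<Rightarrow> 'b \<Rightarrow> real vec" where
  "Lvec kY ys y = vec (length ys) (\<lambda>i. kY (ys ! i) y)"

definition MCMD_hat ::
  "('a \<Rightarrow> 'a \<Rightarrow> real) \<Rightarrow> ('b \<Rightarrow> 'b \<Rightarrow> real) \<Rightarrow> real \<Rightarrow> 'a list \<Rightarrow> 'b list \<Rightarrow> 'b \<Rightarrow> 'b \<Rightarrow> real" where
  "MCMD_hat kZ kY \<epsilon> zs ys y y' =
     (let Linv = the (mat_inverse (Ltilde kY \<epsilon> ys));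
          v = Lvec kY ys y - Lvec kY ys y'
      in sqrt (scalar_prod v ((Linv * gram_mat kZ zs * Linv) *\<^sub>v v)))"

end

theory Submission
  imports Defs "Jordan_Normal_Form.Determinant"
begin

lemma spd_nonneg:
  assumes k: "strictly_pd_kernel_on S k" and xs: "set xs \<subseteq> S"
  shows "0 \<le> (\<Sum>i<length xs. \<Sum>j<length xs. a i * a j * k (xs!i) (xs!j))"
proof -
  define n where "n = length xs"
  define ds where "ds = remdups xs"
  define m where "m = length ds"
  define b where "b y = sum a {i \<in> {..<n}. xs!i = y}" for y
  have dd: "distinct ds" and sds: "set ds = set xs" by (auto simp: ds_def)
  have img: "(\<lambda>i. xs!i) ` {..<n} \<subseteq> set xs" by (auto simp: n_def)
  have "(\<Sum>i<n. \<Sum>j<n. a i * a j * k (xs!i) (xs!j))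
      = (\<Sum>y\<in>set xs. \<Sum>i\<in>{i \<in> {..<n}. xs!i = y}. \<Sum>j<n. a i * a j * k (xs!i) (xs!j))"
    by (rule sum.group[symmetric, OF _ _ img]) auto
  also have "\<dots> = (\<Sum>y\<in>set xs. \<Sum>i\<in>{i \<in> {..<n}. xs!i = y}. \<Sum>y'\<in>set xs. \<Sum>j\<in>{j \<in> {..<n}. xs!j = y'}. a i * a j * k y y')"
  proof (intro sum.cong refl)
    fix y i assume "i \<in> {i \<in> {..<n}. xs!i = y}"
    then have iy: "xs!i = y" by auto
    show "(\<Sum>j<n. a i * a j * k (xs!i) (xs!j)) = (\<Sum>y'\<in>set xs. \<Sum>j\<in>{j \<in> {..<n}. xs!j = y'}. a i * a j * k y y')"
      unfolding iy
    proof -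
      have "(\<Sum>j<n. a i * a j * k y (xs!j)) = (\<Sum>y'\<in>set xs. \<Sum>j\<in>{j \<in> {..<n}. xs!j = y'}. a i * a j * k y (xs!j))"
        by (rule sum.group[symmetric, OF _ _ img]) auto
      also have "\<dots> = (\<Sum>y'\<in>set xs. \<Sum>j\<in>{j \<in> {..<n}. xs!j = y'}. a i * a j * k y y')"
        by (intro sum.cong refl) auto
      finally show "(\<Sum>j<n. a i * a j * k y (xs!j)) = (\<Sum>y'\<in>set xs. \<Sum>j\<in>{j \<in> {..<n}. xs!j = y'}. a i * a j * k y y')" .
    qed
  qed
  also have "\<dots> = (\<Sum>y\<in>set xs. \<Sum>y'\<in>set xs. b y * b y' * k y y')"
  proof (intro sum.cong refl)
    fix y assume "y \<in> set xs"
    have "(\<Sum>i\<in>{i \<in> {..<n}. xs!i = y}. \<Sum>y'\<in>set xs. \<Sum>j\<in>{j \<in> {..<n}. xs!j = y'}. a i * a j * k y y')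
       = (\<Sum>y'\<in>set xs. \<Sum>i\<in>{i \<in> {..<n}. xs!i = y}. \<Sum>j\<in>{j \<in> {..<n}. xs!j = y'}. a i * a j * k y y')"
      by (rule sum.swap)
    also have "\<dots> = (\<Sum>y'\<in>set xs. b y * b y' * k y y')"
      by (simp only: b_def sum_distrib_left sum_distrib_right) (rule sum.cong[OF refl], rule sum.swap)
    finally show "(\<Sum>i\<in>{i \<in> {..<n}. xs!i = y}. \<Sum>y'\<in>set xs. \<Sum>j\<in>{j \<in> {..<n}. xs!j = y'}. a i * a j * k y y')
       = (\<Sum>y'\<in>set xs. b y * b y' * k y y')" .
  qed
  also have "\<dots> = (\<Sum>p<m. \<Sum>q<m. b (ds!p) * b (ds!q) * k (ds!p) (ds!q))"
  proof -
    have bij: "bij_betw (\<lambda>p. ds!p) {..<m} (set xs)"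
      using dd sds by (auto simp: m_def bij_betw_def inj_on_nth set_conv_nth)
    show ?thesis
      by (simp add: sum.reindex_bij_betw[OF bij, symmetric])
  qed
  also have "0 \<le> \<dots>"
  proof (cases "\<exists>p<m. b (ds!p) \<noteq> 0")
    case True
    have "set ds \<subseteq> S" using sds xs by auto
    have H: "\<forall>xs. set xs \<subseteq> S \<longrightarrow> distinct xs \<longrightarrow>
            (\<forall>a. (\<exists>i<length xs. a i \<noteq> 0) \<longrightarrow>
             0 < (\<Sum>i<length xs. \<Sum>j<length xs. a i * a j * k (xs ! i) (xs ! j)))"
      using k unfolding strictly_pd_kernel_on_def by blast
    have ex: "\<exists>p<length ds. (\<lambda>p. b (ds!p)) p \<noteq> 0" using True m_def by simp
    have "0 < (\<Sum>p<length ds. \<Sum>q<length ds. (\<lambda>p. b (ds!p)) p * (\<lambda>p. b (ds!p)) q * k (ds!p) (ds!q))"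
      by (rule H[rule_format, OF \<open>set ds \<subseteq> S\<close> dd ex])
    then show ?thesis by (simp add: m_def)
  next
    case False
    then show ?thesis by simp
  qed
  finally show ?thesis by (simp add: n_def)
qed

definition qf :: "nat \<Rightarrow> (nat \<Rightarrow> nat \<Rightarrow> real) \<Rightarrow> (nat \<Rightarrow> real) \<Rightarrow> real" where
  "qf n k a = (\<Sum>i<n. \<Sum>j<n. a i * a j * k i j)"
definition bf :: "nat \<Rightarrow> (nat \<Rightarrow> nat \<Rightarrow> real) \<Rightarrow> (nat \<Rightarrow> real) \<Rightarrow> (nat \<Rightarrow> real) \<Rightarrow> real" where
  "bf n k a b = (\<Sum>i<n. \<Sum>j<n. a i * b j * k i j)"

lemma bf_sym: assumes "\<And>i j. i < n \<Longrightarrow> j < n \<Longrightarrow> k i j = k j i"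
  shows "bf n k b a = bf n k a b"
  unfolding bf_def
  by (subst sum.swap) (intro sum.cong refl, simp add: assms mult.commute)

lemma qf_expand: assumes "\<And>i j. i < n \<Longrightarrow> j < n \<Longrightarrow> k i j = k j i"
  shows "qf n k (\<lambda>i. a i + t * b i) = qf n k a + 2 * t * bf n k a b + t^2 * qf n k b"
proof -
  have "qf n k (\<lambda>i. a i + t * b i) = qf n k a + t * bf n k a b + t * bf n k b a + t^2 * qf n k b"
    unfolding qf_def bf_def
    by (simp add: algebra_simps sum.distrib sum_distrib_left power2_eq_square)
  then show ?thesis using bf_sym[OF assms] by simp
qed

lemma qf_cong: "(\<And>i. i < n \<Longrightarrow> a i = b i) \<Longrightarrow> qf n k a = qf n k b"
  unfolding qf_def by (intro sum.cong refl) auto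

lemma qf_neg: "qf n k (\<lambda>i. a i - b i) = qf n k (\<lambda>i. b i - a i)"
  unfolding qf_def by (intro sum.cong refl) (simp add: algebra_simps)

lemma qf_cs:
  assumes sym: "\<And>i j. i < n \<Longrightarrow> j < n \<Longrightarrow> k i j = k j i"
    and nn: "\<And>a. 0 \<le> qf n k a"
  shows "(bf n k a b)^2 \<le> qf n k a * qf n k b"
proof -
  define B where "B = bf n k a b"
  have key: "0 \<le> qf n k a + 2 * t * B + t^2 * qf n k b" for t
    using nn[of "\<lambda>i. a i + t * b i"] qf_expand[OF sym] by (simp add: B_def)
  show ?thesis
  proof (cases "qf n k b = 0")
    case True
    have "B = 0"
    proof (rule ccontr)
      assume "B \<noteq> 0"
      have "0 \<le> qf n k a + 2 * (-(qf n k a + 1) / (2 * B)) * B"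
        using key[where t="-(qf n k a + 1) / (2 * B)"] True by simp
      also have "\<dots> = -1" using \<open>B \<noteq> 0\<close> by (simp add: field_simps)
      finally show False by simp
    qed
    then show ?thesis using True by (simp add: B_def)
  next
    case False
    then have qb: "qf n k b > 0" using nn[of b] by simp
    have "0 \<le> qf n k a + 2 * (-B / qf n k b) * B + (-B / qf n k b)^2 * qf n k b"
      using key by blast
    also have "\<dots> = qf n k a - B^2 / qf n k b"
      using qb by (simp add: field_simps power2_eq_square)
    finally have "B^2 / qf n k b \<le> qf n k a" by simp
    then show ?thesis using qb by (simp add: B_def field_simps)
  qed
qed

lemma qf_triangle:
  assumes sym: "\<And>i j. i < n \<Longrightarrow> j < n \<Longrightarrow> k i j = k j i"
    and nn: "\<And>a. 0 \<le> qf n k a"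
  shows "sqrt (qf n k (\<lambda>i. a i + b i)) \<le> sqrt (qf n k a) + sqrt (qf n k b)"
proof -
  have e: "qf n k (\<lambda>i. a i + b i) = qf n k a + 2 * bf n k a b + qf n k b"
    using qf_expand[OF sym, where a=a and t=1 and b=b] by simp
  have "bf n k a b \<le> sqrt (qf n k a * qf n k b)"
    using qf_cs[OF sym nn, where a=a and b=b] real_le_rsqrt by blast
  also have "\<dots> = sqrt (qf n k a) * sqrt (qf n k b)" by (simp add: real_sqrt_mult)
  finally have "qf n k (\<lambda>i. a i + b i) \<le> (sqrt (qf n k a) + sqrt (qf n k b))^2"
    using e nn[of a] nn[of b] by (simp add: power2_eq_square algebra_simps)
  then have "sqrt (qf n k (\<lambda>i. a i + b i)) \<le> sqrt ((sqrt (qf n k a) + sqrt (qf n k b))^2)"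
    by (rule real_sqrt_le_mono)
  also have "\<dots> = sqrt (qf n k a) + sqrt (qf n k b)" using nn[of a] nn[of b] by simp
  finally show ?thesis .
qed

lemma quad_mat:
  fixes M :: "real mat"
  assumes M: "M \<in> carrier_mat n n" and u: "u \<in> carrier_vec n"
  shows "scalar_prod u (M *\<^sub>v u) = (\<Sum>i<n. \<Sum>j<n. vec_index u i * vec_index u j * M$$(i,j))"
proof -
  have "scalar_prod u (M *\<^sub>v u) = (\<Sum>i<n. vec_index u i * (\<Sum>j<n. M$$(i,j) * vec_index u j))"
    using M u by (simp add: scalar_prod_def row_def lessThan_atLeast0)
  also have "\<dots> = (\<Sum>i<n. \<Sum>j<n. vec_index u i * vec_index u j * M$$(i,j))"
    by (simp add: sum_distrib_left mult.commute mult.left_commute)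
  finally show ?thesis .
qed

theorem theorem4:
  fixes kZ :: "'z \<Rightarrow> 'z \<Rightarrow> real" and kY :: "real list \<Rightarrow> real list \<Rightarrow> real"
    and c :: nat and \<epsilon> :: real and zs :: "'z list" and ys :: "real list list"
  assumes "strictly_pd_kernel_on UNIV kZ"
    and "strictly_pd_kernel_on (label_space c) kY"
    and "\<epsilon> > 0"
    and "length zs = length ys"
    and "distinct zs"
    and "set ys \<subseteq> label_space c"
    and "label_space c \<subseteq> set ys"
  shows "Metric_space (label_space c) (MCMD_hat kZ kY \<epsilon> zs ys)"
proof -
  define n where "n = length ys"
  define K where "K = gram_mat kZ zs"
  define Lt where "Lt = Ltilde kY \<epsilon> ys"
  have K: "K \<in> carrier_mat n n" using assms(4) by (simp add: K_def gram_mat_def n_def)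
  have Lt: "Lt \<in> carrier_mat n n" by (simp add: Lt_def Ltilde_def gram_mat_def n_def)
  have symY: "\<forall>x\<in>label_space c. \<forall>y\<in>label_space c. kY x y = kY y x"
    using assms(2) by (simp add: strictly_pd_kernel_on_def)
  have symZ: "\<And>x y. kZ x y = kZ y x" using assms(1) by (simp add: strictly_pd_kernel_on_def)
  have ysin: "\<And>i. i < n \<Longrightarrow> ys!i \<in> label_space c" using assms(6) n_def nth_mem by blast
  have Ltij: "Lt $$ (i,j) = (if i = j then \<epsilon> * real n else 0) + kY (ys!i) (ys!j)"
    if "i < n" "j < n" for i j
    using that by (simp add: Lt_def Ltilde_def gram_mat_def n_def)
  have Ltsym: "transpose_mat Lt = Lt"
    by (rule eq_matI) (use Lt symY ysin Ltij in auto)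
  have ker: "u = 0\<^sub>v n" if u: "u \<in> carrier_vec n" and Lu: "Lt *\<^sub>v u = 0\<^sub>v n" for u
  proof (rule ccontr)
    assume ne: "u \<noteq> 0\<^sub>v n"
    then obtain i where i: "i < n" "vec_index u i \<noteq> 0" using u by (auto simp: vec_eq_iff)
    have pos: "0 < (\<Sum>i<n. vec_index u i * vec_index u i)"
    proof (rule sum_pos2[where i=i])
      show "0 < vec_index u i * vec_index u i" using i(2) not_real_square_gt_zero by blast
    qed (use i in auto)
    have psd: "0 \<le> (\<Sum>i<n. \<Sum>j<n. vec_index u i * vec_index u j * kY (ys!i) (ys!j))"
      using spd_nonneg[OF assms(2) assms(6)] n_def by blast
    have "scalar_prod u (Lt *\<^sub>v u) = (\<Sum>i<n. \<Sum>j<n. vec_index u i * vec_index u j * Lt $$ (i,j))"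
      by (rule quad_mat[OF Lt u])
    also have "\<dots> = (\<Sum>i<n. \<Sum>j<n. (if i = j then \<epsilon> * real n * (vec_index u i * vec_index u j) else 0)
                 + vec_index u i * vec_index u j * kY (ys!i) (ys!j))"
      by (intro sum.cong refl) (simp add: Ltij algebra_simps)
    also have "\<dots> = \<epsilon> * real n * (\<Sum>i<n. vec_index u i * vec_index u i)
                 + (\<Sum>i<n. \<Sum>j<n. vec_index u i * vec_index u j * kY (ys!i) (ys!j))"
      by (simp add: sum.distrib sum_distrib_left)
    finally have "scalar_prod u (Lt *\<^sub>v u) = \<epsilon> * real n * (\<Sum>i<n. vec_index u i * vec_index u i)
                 + (\<Sum>i<n. \<Sum>j<n. vec_index u i * vec_index u j * kY (ys!i) (ys!j))" .
    moreover have "\<epsilon> * real n * (\<Sum>i<n. vec_index u i * vec_index u i) > 0"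
      using pos assms(3) i by simp
    moreover have "scalar_prod u (Lt *\<^sub>v u) = 0" using Lu u by simp
    ultimately show False using psd by linarith
  qed
  have "det Lt \<noteq> 0" using det_0_iff_vec_prod_zero[OF Lt] ker by auto
  then have "Lt \<in> Units (ring_mat TYPE(real) n ())" by (rule det_non_zero_imp_unit[OF Lt])
  then obtain B where mi: "mat_inverse Lt = Some B"
    using mat_inverse(1)[OF Lt, where b="()"] by (cases "mat_inverse Lt") auto
  from mat_inverse(2)[OF Lt mi] have LB: "Lt * B = 1\<^sub>m n" and B: "B \<in> carrier_mat n n" by auto
  have TBL: "transpose_mat B * Lt = 1\<^sub>m n"
    using arg_cong[OF LB, of transpose_mat] transpose_mult[OF Lt B] Ltsym by simp
  have Bsym: "transpose_mat B = B"
  proof -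
    have "transpose_mat B = transpose_mat B * 1\<^sub>m n" using B by simp
    also have "\<dots> = transpose_mat B * (Lt * B)" using LB by simp
    also have "\<dots> = (transpose_mat B * Lt) * B"
      using assoc_mult_mat[of "transpose_mat B" n n Lt n B n] B Lt by simp
    also have "\<dots> = B" using TBL B by simp
    finally show ?thesis .
  qed
  define f where "f y = B *\<^sub>v Lvec kY ys y" for y
  have Lv: "Lvec kY ys y \<in> carrier_vec n" for y by (simp add: Lvec_def n_def)
  have fc: "f y \<in> carrier_vec n" for y using B unfolding f_def by (rule mult_mat_vec_carrier) (rule Lv)
  have Lf: "Lt *\<^sub>v f y = Lvec kY ys y" for y
  proof -
    have "Lt *\<^sub>v f y = (Lt * B) *\<^sub>v Lvec kY ys y"
      unfolding f_def using Lt B Lv by (simp add: assoc_mult_mat_vec)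
    then show ?thesis using LB Lv by simp
  qed
  define kk where "kk i j = kZ (zs!i) (zs!j)" for i j
  define Q where "Q a = qf n kk a" for a
  have deq: "MCMD_hat kZ kY \<epsilon> zs ys x y = sqrt (Q (\<lambda>i. vec_index (f x) i - vec_index (f y) i))" for x y
  proof -
    define v where "v = Lvec kY ys x - Lvec kY ys y"
    have v: "v \<in> carrier_vec n" using Lv by (simp add: v_def)
    define w where "w = B *\<^sub>v v"
    have w: "w \<in> carrier_vec n" using B v by (simp add: w_def)
    have "(B * K * B) *\<^sub>v v = B *\<^sub>v (K *\<^sub>v w)" 
    proof -
      have BK: "B * K \<in> carrier_mat n n" using B K by simp
      have "(B * K * B) *\<^sub>v v = (B * K) *\<^sub>v w" unfolding w_def by (rule assoc_mult_mat_vec[OF BK B v])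
      also have "\<dots> = B *\<^sub>v (K *\<^sub>v w)" by (rule assoc_mult_mat_vec[OF B K w])
      finally show ?thesis .
    qed
    then have "scalar_prod v ((B * K * B) *\<^sub>v v) = scalar_prod v (B *\<^sub>v (K *\<^sub>v w))" by simp
    also have "\<dots> = scalar_prod (transpose_mat B *\<^sub>v v) (K *\<^sub>v w)"
      using transpose_vec_mult_scalar[OF B, of "K *\<^sub>v w" v] K w v by simp
    also have "\<dots> = scalar_prod w (K *\<^sub>v w)" using Bsym w_def by simp
    also have "\<dots> = (\<Sum>i<n. \<Sum>j<n. vec_index w i * vec_index w j * K $$ (i,j))" by (rule quad_mat[OF K w])
    also have "\<dots> = Q (\<lambda>i. vec_index w i)" unfolding Q_def qf_def
      by (intro sum.cong refl) (use assms(4) in \<open>simp add: K_def gram_mat_def kk_def n_def\<close>)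
    also have "\<dots> = Q (\<lambda>i. vec_index (f x) i - vec_index (f y) i)"
    proof -
      have "w = f x - f y" by (simp add: w_def v_def f_def mult_minus_distrib_mat_vec[OF B Lv Lv])
      moreover have "vec_index (f x - f y) i = vec_index (f x) i - vec_index (f y) i" if "i < n" for i
        using fc[of y] that by (simp add: index_minus_vec)
      ultimately show ?thesis unfolding Q_def by (intro qf_cong) auto
    qed
    finally show ?thesis by (simp add: MCMD_hat_def Let_def Lt_def[symmetric] K_def[symmetric] v_def[symmetric] mi)
  qed
  have kksym: "\<And>i j. i < n \<Longrightarrow> j < n \<Longrightarrow> kk i j = kk j i" using symZ kk_def by simp
  have Qnn: "\<And>a. 0 \<le> Q a"
    using spd_nonneg[OF assms(1), of zs] by (simp add: Q_def qf_def kk_def n_def assms(4)[symmetric])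
  have Qpos: "0 < Q a" if "i < n" "a i \<noteq> 0" for a i
  proof -
    have H: "\<forall>xs. set xs \<subseteq> UNIV \<longrightarrow> distinct xs \<longrightarrow>
            (\<forall>a. (\<exists>i<length xs. a i \<noteq> 0) \<longrightarrow>
             0 < (\<Sum>i<length xs. \<Sum>j<length xs. a i * a j * kZ (xs ! i) (xs ! j)))"
      using assms(1) unfolding strictly_pd_kernel_on_def by blast
    have ex: "\<exists>i<length zs. a i \<noteq> 0" using that assms(4) n_def by auto
    have "0 < (\<Sum>i<length zs. \<Sum>j<length zs. a i * a j * kZ (zs ! i) (zs ! j))"
      by (rule H[rule_format, OF _ assms(5) ex]) simp
    then show ?thesis unfolding Q_def qf_def kk_def n_def assms(4)[symmetric] .
  qed
  show ?thesis
  proof (unfold_locales)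
    fix x y show "0 \<le> MCMD_hat kZ kY \<epsilon> zs ys x y" by (simp add: deq Qnn)
  next
    fix x y show "MCMD_hat kZ kY \<epsilon> zs ys x y = MCMD_hat kZ kY \<epsilon> zs ys y x"
      unfolding deq Q_def by (subst qf_neg) (rule refl)
  next
    fix x y assume x: "x \<in> label_space c" and y: "y \<in> label_space c"
    show "MCMD_hat kZ kY \<epsilon> zs ys x y = 0 \<longleftrightarrow> x = y"
    proof
      assume "x = y" then show "MCMD_hat kZ kY \<epsilon> zs ys x y = 0" by (simp add: deq Q_def qf_def)
    next
      assume "MCMD_hat kZ kY \<epsilon> zs ys x y = 0"
      then have Q0: "Q (\<lambda>i. vec_index (f x) i - vec_index (f y) i) = 0" using deq by simp
      have "f x = f y"
      proof (rule eq_vecI)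
        fix i assume "i < dim_vec (f y)"
        then have "i < n" using fc[of y] by simp
        then show "vec_index (f x) i = vec_index (f y) i"
          using Qpos[of i "\<lambda>i. vec_index (f x) i - vec_index (f y) i"] Q0 by auto
      qed (use fc[of x] fc[of y] in simp)
      then have Leq: "Lvec kY ys x = Lvec kY ys y" using Lf by metis
      have kk2: "kY (ys!i) x = kY (ys!i) y" if "i < n" for i
        using arg_cong[OF Leq, of "\<lambda>v. vec_index v i"] that by (simp add: Lvec_def n_def)
      obtain i where i: "i < n" "ys!i = x" using x assms(7) in_set_conv_nth[of x ys] unfolding n_def by blast
      obtain j where j: "j < n" "ys!j = y" using y assms(7) in_set_conv_nth[of y ys] unfolding n_def by blast
      have e1: "kY x x = kY x y" using kk2[OF i(1)] i by simp
      have e2: "kY y x = kY y y" using kk2[OF j(1)] j by simp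
      show "x = y"
      proof (rule ccontr)
        assume ne: "x \<noteq> y"
        define a where "a i = (if i = 0 then 1 else - 1 :: real)" for i :: nat
        have "0 < (\<Sum>i<length [x,y]. \<Sum>j<length [x,y]. a i * a j * kY ([x,y] ! i) ([x,y] ! j))"
        proof -
          have H: "\<forall>xs. set xs \<subseteq> label_space c \<longrightarrow> distinct xs \<longrightarrow>
            (\<forall>a.  (\<exists>i<length xs. a i \<noteq> 0) \<longrightarrow>
             0 < (\<Sum>i<length xs. \<Sum>j<length xs. a i * a j * kY (xs ! i) (xs ! j)))"
            using assms(2) unfolding strictly_pd_kernel_on_def by blast
          have s: "set [x,y] \<subseteq> label_space c" using x y by simp
          have d: "distinct [x,y]" using ne by simp
          have ex: "\<exists>i<length [x,y]. a i \<noteq> 0" by (rule exI[of _ 0]) (simp add: a_def)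
          show ?thesis by (rule H[rule_format, OF s d ex])
        qed
        also have "\<dots> = kY x x - kY x y - kY y x + kY y y"
          by (simp add: a_def numeral_2_eq_2 lessThan_Suc)
        also have "\<dots> = 0" using e1 e2 by simp
        finally show False by simp
      qed
    qed
  next
    fix x y z assume "x \<in> label_space c" "y \<in> label_space c" "z \<in> label_space c"
    have "MCMD_hat kZ kY \<epsilon> zs ys x z
        = sqrt (Q (\<lambda>i. (vec_index (f x) i - vec_index (f y) i) + (vec_index (f y) i - vec_index (f z) i)))"
      by (simp add: deq)
    also have "\<dots> \<le> sqrt (Q (\<lambda>i. vec_index (f x) i - vec_index (f y) i)) + sqrt (Q (\<lambda>i. vec_index (f y) i - vec_index (f z) i))"
      unfolding Q_def by (rule qf_triangle[OF kksym]) (use Qnn Q_def in auto)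
    finally show "MCMD_hat kZ kY \<epsilon> zs ys x z \<le> MCMD_hat kZ kY \<epsilon> zs ys x y + MCMD_hat kZ kY \<epsilon> zs ys y z"
      by (simp add: deq)
  qed
qed

end
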